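(* $\{\delta\in N:\delta^2=-4,\ \delta/2\in N^*\}=\{r+\rho(r):r\in N,\ r^2=-2\}.$
   Context: Lattices: $U$ has Gram matrix $\begin{pmatrix}0&1\\1&0\end{pmatrix}$; $D_4$ negative definite; $U(2)$ is $U$ with doubled form. $N=U\oplus U(2)\oplus D_4\oplus D_4$, $N^*$ its dual. $\rho=\rho_1\oplus\rho_0\oplus\rho_0\in O(N)$, where for $D_4=\{x\in\mathbb Z^4:\sum x_i\equiv0\bmod 2\}$ (negative standard inner product) $\rho_0(x_1,x_2,x_3,x_4)=(x_2,-x_1,x_4,-x_3)$, and for standard hyperbolic bases $e,f$ of $U$, $e',f'$ of $U(2)$, $\rho_1(e)=-e-e'$, $\rho_1(f)=f-f'$, $\rho_1(e')=e'+2e$, $\rho_1(f')=2f-f'$. $\rho$ acts trivially on $N^*/N$. *)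

theory Defs
  imports Complex_Main
begin

text \<open>Model of N = U + U(2) + D4 + D4 in coordinates: a vector is a function
  nat => 'a supported on {0..<12}.  Coordinates 0,1 are the coefficients of e,f (basis of U),
  2,3 those of e',f' (basis of U(2)), 4..7 the first D4 (as a sublattice of Z^4),
  8..11 the second D4.\<close>

definition supp12 :: "(nat \<Rightarrow> 'a::zero) \<Rightarrow> bool" where
  "supp12 v \<longleftrightarrow> (\<forall>i\<ge>12. v i = 0)"

definition bil :: "(nat \<Rightarrow> 'a::comm_ring_1) \<Rightarrow> (nat \<Rightarrow> 'a) \<Rightarrow> 'a" where
  "bil v w = v 0 * w 1 + v 1 * w 0 + 2 * (v 2 * w 3 + v 3 * w 2)
             - (\<Sum>i\<in>{4..<12}. v i * w i)"

definition latN :: "(nat \<Rightarrow> int) set" where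
  "latN = {v. supp12 v \<and> even (\<Sum>i\<in>{4..<8}. v i) \<and> even (\<Sum>i\<in>{8..<12}. v i)}"

definition latNdual :: "(nat \<Rightarrow> rat) set" where
  "latNdual = {w. supp12 w \<and> (\<forall>v\<in>latN. bil w (\<lambda>i. of_int (v i)) \<in> \<int>)}"

text \<open>rho = rho1 + rho0 + rho0.  For v = ae+bf+ce'+df':
  rho1 v = (-a+2c)e + (b+2d)f + (-a+c)e' + (-b-d)f'.
  rho0(x1,x2,x3,x4) = (x2,-x1,x4,-x3).\<close>
definition rho :: "(nat \<Rightarrow> int) \<Rightarrow> (nat \<Rightarrow> int)" where
  "rho v = (\<lambda>i.
     if i = 0 then - v 0 + 2 * v 2
     else if i = 1 then v 1 + 2 * v 3
     else if i = 2 then - v 0 + v 2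
     else if i = 3 then - v 1 - v 3
     else if i = 4 then v 5 else if i = 5 then - v 4
     else if i = 6 then v 7 else if i = 7 then - v 6
     else if i = 8 then v 9 else if i = 9 then - v 8
     else if i = 10 then v 11 else if i = 11 then - v 10
     else 0)"

end

theory Submission
  imports Defs
begin

lemma set4_12: "{4..<12::nat} = {4,5,6,7,8,9,10,11}" by auto
lemma set4_8: "{4..<8::nat} = {4,5,6,7}" by auto
lemma set8_12: "{8..<12::nat} = {8,9,10,11}" by auto

lemma bil_expand: "bil v w = v 0 * w 1 + v 1 * w 0 + 2 * (v 2 * w 3 + v 3 * w 2)
   - (v 4 * w 4 + v 5 * w 5 + v 6 * w 6 + v 7 * w 7 + v 8 * w 8 + v 9 * w 9 + v 10 * w 10 + v 11 * w 11)"
  unfolding bil_def set4_12 by (simp add: algebra_simps)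

lemma latN_iff: "v \<in> latN \<longleftrightarrow> supp12 v \<and> even (v 4 + v 5 + v 6 + v 7) \<and> even (v 8 + v 9 + v 10 + v 11)"
  unfolding latN_def set4_8 set8_12 by (simp add: algebra_simps)

lemma bil_half: "bil (\<lambda>i. of_int (d i) / 2 :: rat) (\<lambda>i. of_int (v i)) = of_int (bil d v) / 2"
  unfolding bil_expand by (simp add: field_simps)

lemma half_int: "(of_int n / 2 :: rat) \<in> \<int> \<longleftrightarrow> even n"
proof
  assume "(of_int n / 2 :: rat) \<in> \<int>"
  then obtain m where "(of_int n / 2 :: rat) = of_int m" by (auto elim: Ints_cases)
  then have "(of_int n :: rat) = of_int (2*m)" by simp
  then have "n = 2*m" by linarith
  then show "even n" by simp
next
  assume "even n"
  then obtain m where "n = 2*m" by auto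
  then show "(of_int n / 2 :: rat) \<in> \<int>" by simp
qed

lemma dual_iff: "(\<lambda>i. of_int (d i) / 2 :: rat) \<in> latNdual \<longleftrightarrow> supp12 d \<and> (\<forall>v\<in>latN. even (bil d v))"
  unfolding latNdual_def supp12_def by (simp add: bil_half half_int)

lemma rho_hi: "i \<ge> 12 \<Longrightarrow> rho r i = 0"
  unfolding rho_def by simp

lemma bil_sum_rho: "bil (\<lambda>i. r i + rho r i) (\<lambda>i. r i + rho r i) = 2 * bil r r"
  unfolding bil_expand rho_def by (simp add: algebra_simps)

lemma block_even:
  fixes r4 r5 r6 r7 v4 v5 v6 v7 :: int
  assumes "even (r4+r5+r6+r7)" "even (v4+v5+v6+v7)"
  shows "even ((r4+r5)*v4 + (r5-r4)*v5 + (r6+r7)*v6 + (r7-r6)*v7)"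
proof -
  obtain k where k0: "r4+r5+r6+r7 = 2*k" using assms(1) by (elim evenE) simp
  then have k: "r7 = 2*k - r4 - r5 - r6" by simp
  obtain m where m0: "v4+v5+v6+v7 = 2*m" using assms(2) by (elim evenE) simp
  then have m: "v7 = 2*m - v4 - v5 - v6" by simp
  have "(r4+r5)*v4 + (r5-r4)*v5 + (r6+r7)*v6 + (r7-r6)*v7
     = 2 * (- r4*v5 - r6*v7 + (r4+r5)*(v4+v5-m) + k*(v6+v7))"
    unfolding k m by (simp add: algebra_simps)
  then show ?thesis by simp
qed



lemma less12: "(i::nat) < 12 \<Longrightarrow> i = 0 \<or> i = 1 \<or> i = 2 \<or> i = 3 \<or> i = 4 \<or> i = 5 \<or> i = 6 \<or> i = 7 \<or> i = 8 \<or> i = 9 \<or> i = 10 \<or> i = 11"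
  by (simp add: eval_nat_numeral less_Suc_eq)

lemma incl2:
  assumes r: "r \<in> latN" and rr: "bil r r = -2"
  defines "d \<equiv> (\<lambda>i. r i + rho r i)"
  shows "d \<in> latN \<and> bil d d = -4 \<and> (\<lambda>i. of_int (d i) / 2 :: rat) \<in> latNdual"
proof -
  have s: "supp12 r" and e1: "even (r 4 + r 5 + r 6 + r 7)" and e2: "even (r 8 + r 9 + r 10 + r 11)"
    using r by (auto simp: latN_iff)
  have sd: "supp12 d" using s unfolding supp12_def d_def by (simp add: rho_hi)
  have dN: "d \<in> latN" unfolding latN_iff using sd by (simp add: d_def rho_def)
  have dd: "bil d d = -4" unfolding d_def bil_sum_rho rr by simp
  have "even (bil d v)" if v: "v \<in> latN" for v
  proof -
    have f1: "even (v 4 + v 5 + v 6 + v 7)" and f2: "even (v 8 + v 9 + v 10 + v 11)"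
      using v by (auto simp: latN_iff)
    have b1: "even ((r 4 + r 5)*v 4 + (r 5 - r 4)*v 5 + (r 6 + r 7)*v 6 + (r 7 - r 6)*v 7)"
      by (rule block_even[OF e1 f1])
    have b2: "even ((r 8 + r 9)*v 8 + (r 9 - r 8)*v 9 + (r 10 + r 11)*v 10 + (r 11 - r 10)*v 11)"
      by (rule block_even[OF e2 f2])
    have "bil d v = 2 * (r 2 * v 1 + (r 1 + r 3) * v 0 + (2 * r 2 - r 0) * v 3 - r 1 * v 2)
       - (((r 4 + r 5)*v 4 + (r 5 - r 4)*v 5 + (r 6 + r 7)*v 6 + (r 7 - r 6)*v 7)
         + ((r 8 + r 9)*v 8 + (r 9 - r 8)*v 9 + (r 10 + r 11)*v 10 + (r 11 - r 10)*v 11))"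
      unfolding bil_expand d_def rho_def by (simp add: algebra_simps)
    then show ?thesis using b1 b2 by simp
  qed
  then have "(\<lambda>i. of_int (d i) / 2 :: rat) \<in> latNdual" using sd by (simp add: dual_iff)
  then show ?thesis using dN dd by simp
qed


lemma split_pair: "even ((a::int) + b) \<Longrightarrow> \<exists>x y. a = x + y \<and> b = y - x"
  by presburger

definition tv :: "nat \<Rightarrow> nat \<Rightarrow> nat \<Rightarrow> int" where
  "tv j k = (\<lambda>i. if i = j \<or> i = k then 1 else 0)"

lemma incl1:
  assumes dN: "d \<in> latN" and dd: "bil d d = -4"
    and du: "(\<lambda>i. of_int (d i) / 2 :: rat) \<in> latNdual"
  shows "\<exists>r. d = (\<lambda>i. r i + rho r i) \<and> r \<in> latN \<and> bil r r = -2"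
proof -
  have sd: "supp12 d" and ev: "\<And>v. v \<in> latN \<Longrightarrow> even (bil d v)" using du by (auto simp: dual_iff)
  have tvN: "\<And>j k. (j,k) \<in> {(1,1),(0,0),(4,5),(4,6),(6,7),(8,9),(8,10),(10,11)} \<Longrightarrow> tv j k \<in> latN"
    by (auto simp: latN_iff tv_def supp12_def)
  have "even (bil d (tv 1 1))" by (rule ev, rule tvN) simp
  then have e0: "even (d 0)" by (simp add: bil_expand tv_def)
  have "even (bil d (tv 0 0))" by (rule ev, rule tvN) simp
  then have e1: "even (d 1)" by (simp add: bil_expand tv_def)
  have "even (bil d (tv 4 5))" by (rule ev, rule tvN) simp
  then have e45: "even (d 4 + d 5)" by (simp add: bil_expand tv_def)
  have "even (bil d (tv 4 6))" by (rule ev, rule tvN) simp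
  then have e46: "even (d 4 + d 6)" by (simp add: bil_expand tv_def)
  have "even (bil d (tv 6 7))" by (rule ev, rule tvN) simp
  then have e67: "even (d 6 + d 7)" by (simp add: bil_expand tv_def)
  have "even (bil d (tv 8 9))" by (rule ev, rule tvN) simp
  then have e89: "even (d 8 + d 9)" by (simp add: bil_expand tv_def)
  have "even (bil d (tv 8 10))" by (rule ev, rule tvN) simp
  then have e810: "even (d 8 + d 10)" by (simp add: bil_expand tv_def)
  have "even (bil d (tv 10 11))" by (rule ev, rule tvN) simp
  then have e1011: "even (d 10 + d 11)" by (simp add: bil_expand tv_def)
  obtain c where c: "d 0 = 2 * c" using e0 by (elim evenE)
  obtain h where h: "d 1 = 2 * h" using e1 by (elim evenE)
  obtain x1 x2 where x12: "d 4 = x1 + x2" "d 5 = x2 - x1" using split_pair[OF e45] by blast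
  obtain x3 x4 where x34: "d 6 = x3 + x4" "d 7 = x4 - x3" using split_pair[OF e67] by blast
  obtain y1 y2 where y12: "d 8 = y1 + y2" "d 9 = y2 - y1" using split_pair[OF e89] by blast
  obtain y3 y4 where y34: "d 10 = y3 + y4" "d 11 = y4 - y3" using split_pair[OF e1011] by blast
  define r :: "nat \<Rightarrow> int" where "r = (\<lambda>i. if i = 0 then d 0 - d 2 else if i = 1 then - d 3 else if i = 2 then c
     else if i = 3 then h + d 3 else if i = 4 then x1 else if i = 5 then x2 else if i = 6 then x3
     else if i = 7 then x4 else if i = 8 then y1 else if i = 9 then y2 else if i = 10 then y3
     else if i = 11 then y4 else 0)"
  have deq: "d = (\<lambda>i. r i + rho r i)"
  proof
    fix i
    show "d i = r i + rho r i"
    proof (cases "i < 12")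
      case True
      then show ?thesis using less12[OF True] c h x12 x34 y12 y34
        by (elim disjE) (simp_all add: r_def rho_def)
    next
      case False
      then show ?thesis using sd by (simp add: supp12_def r_def rho_hi)
    qed
  qed
  have rN: "r \<in> latN"
    unfolding latN_iff supp12_def r_def using e46 e810 x12 x34 y12 y34
    by (simp add: algebra_simps)
  have "bil r r = -2" using dd unfolding deq bil_sum_rho by simp
  then show ?thesis using deq rN by blast
qed

theorem lemma4p5:
  shows "{\<delta>. \<delta> \<in> latN \<and> bil \<delta> \<delta> = -4 \<and> (\<lambda>i. of_int (\<delta> i) / 2 :: rat) \<in> latNdual}
       = {(\<lambda>i. r i + rho r i) | r. r \<in> latN \<and> bil r r = -2}"
proof
  show "{\<delta>. \<delta> \<in> latN \<and> bil \<delta> \<delta> = -4 \<and> (\<lambda>i. of_int (\<delta> i) / 2 :: rat) \<in> latNdual}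
       \<subseteq> {(\<lambda>i. r i + rho r i) | r. r \<in> latN \<and> bil r r = -2}"
    using incl1 by blast
  show "{(\<lambda>i. r i + rho r i) | r. r \<in> latN \<and> bil r r = -2}
       \<subseteq> {\<delta>. \<delta> \<in> latN \<and> bil \<delta> \<delta> = -4 \<and> (\<lambda>i. of_int (\<delta> i) / 2 :: rat) \<in> latNdual}"
    using incl2 by blast
qed

end
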